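(* Let $T$ be a tree on $n>3$ vertices, and suppose $u$ and $v$ are two distinct leaves of $T$ adjacent to the same vertex. Then $$\mathrm{rank}(\mathrm{Max4PC}_T)=\mathrm{rank}(\mathrm{Max4PC}_{T-u})=\mathrm{rank}(\mathrm{Max4PC}_{T-v}).$$
   Context: For a tree $T$ with vertex set $V$, $|V|=n$, let $d_{x,y}$ denote the distance between vertices $x,y$ in $T$. $\mathrm{Max4PC}_T$ is the $\binom{n}{2}\times\binom{n}{2}$ matrix with rows and columns indexed by the $2$-element subsets of $V$, whose entry in row $\{w,x\}$ and column $\{y,z\}$ is $\max\{d_{w,x}+d_{y,z},\ d_{w,y}+d_{x,z},\ d_{w,z}+d_{x,y}\}$. $T-u$ denotes the tree obtained from $T$ by deleting the leaf $u$. A leaf is a vertex of degree $1$. *)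

theory Defs
  imports Complex_Main
begin

definition is_walk :: "'a set set \<Rightarrow> 'a list \<Rightarrow> bool" where
  "is_walk E xs \<longleftrightarrow> xs \<noteq> [] \<and> (\<forall>i. Suc i < length xs \<longrightarrow> {xs ! i, xs ! Suc i} \<in> E)"

definition is_tree :: "'a set \<Rightarrow> 'a set set \<Rightarrow> bool" where
  "is_tree V E \<longleftrightarrow> finite V \<and> V \<noteq> {}
     \<and> (\<forall>e\<in>E. e \<subseteq> V \<and> card e = 2)
     \<and> (\<forall>x\<in>V. \<forall>y\<in>V. \<exists>xs. is_walk E xs \<and> hd xs = x \<and> last xs = y)
     \<and> card E = card V - 1"

definition gdist :: "'a set set \<Rightarrow> 'a \<Rightarrow> 'a \<Rightarrow> nat" where
  "gdist E x y = (LEAST n. \<exists>xs. is_walk E xs \<and> hd xs = x \<and> last xs = y \<and> length xs = Suc n)"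

definition is_leaf :: "'a set \<Rightarrow> 'a set set \<Rightarrow> 'a \<Rightarrow> bool" where
  "is_leaf V E u \<longleftrightarrow> u \<in> V \<and> card {e \<in> E. u \<in> e} = 1"

definition del_vert_V :: "'a set \<Rightarrow> 'a \<Rightarrow> 'a set" where
  "del_vert_V V u = V - {u}"

definition del_vert_E :: "'a set set \<Rightarrow> 'a \<Rightarrow> 'a set set" where
  "del_vert_E E u = {e \<in> E. u \<notin> e}"

definition pairs :: "'a set \<Rightarrow> 'a set set" where
  "pairs V = {p. p \<subseteq> V \<and> card p = 2}"

definition max4 :: "'a set set \<Rightarrow> 'a \<Rightarrow> 'a \<Rightarrow> 'a \<Rightarrow> 'a \<Rightarrow> real" where
  "max4 E w x y z = real (max (gdist E w x + gdist E y z)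
                       (max (gdist E w y + gdist E x z) (gdist E w z + gdist E x y)))"

text \<open>Entry of Max4PC_T in row {w,x} and column {y,z} (independent of the ordering).\<close>
definition Max4PC :: "'a set set \<Rightarrow> 'a set \<Rightarrow> 'a set \<Rightarrow> real" where
  "Max4PC E p q = Max {max4 E w x y z | w x y z. p = {w, x} \<and> q = {y, z}}"

definition rows_lin_indep :: "'i set \<Rightarrow> 'j set \<Rightarrow> ('i \<Rightarrow> 'j \<Rightarrow> real) \<Rightarrow> bool" where
  "rows_lin_indep K J M \<longleftrightarrow>
     (\<forall>c :: 'i \<Rightarrow> real. (\<forall>j\<in>J. (\<Sum>i\<in>K. c i * M i j) = 0) \<longrightarrow> (\<forall>i\<in>K. c i = 0))"

definition mat_rank :: "'i set \<Rightarrow> 'j set \<Rightarrow> ('i \<Rightarrow> 'j \<Rightarrow> real) \<Rightarrow> nat" where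
  "mat_rank I J M = Max {card K | K. K \<subseteq> I \<and> rows_lin_indep K J M}"

definition rank_Max4PC :: "'a set \<Rightarrow> 'a set set \<Rightarrow> nat" where
  "rank_Max4PC V E = mat_rank (pairs V) (pairs V) (Max4PC E)"

end

theory Submission
  imports Defs "HOL-Library.Function_Algebras"
begin


lemma walk_Nil[simp]: "\<not> is_walk E []" by (simp add: is_walk_def)
lemma walk_single[simp]: "is_walk E [x]" by (simp add: is_walk_def)
lemma walk_Cons2[simp]: "is_walk E (x#y#zs) \<longleftrightarrow> {x,y} \<in> E \<and> is_walk E (y#zs)"
proof
  assume h: "is_walk E (x#y#zs)"
  have a: "\<forall>i. Suc i < length (x#y#zs) \<longrightarrow> {(x#y#zs) ! i, (x#y#zs) ! Suc i} \<in> E"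
    using h unfolding is_walk_def by blast
  have "{x,y} \<in> E" using a[rule_format, of 0] by simp
  moreover have "is_walk E (y#zs)" unfolding is_walk_def
  proof (intro conjI allI impI)
    fix i assume "Suc i < length (y#zs)"
    then show "{(y#zs) ! i, (y#zs) ! Suc i} \<in> E" using a[rule_format, of "Suc i"] by simp
  qed simp
  ultimately show "{x,y} \<in> E \<and> is_walk E (y#zs)" by blast
next
  assume h: "{x,y} \<in> E \<and> is_walk E (y#zs)"
  show "is_walk E (x#y#zs)" unfolding is_walk_def
  proof (intro conjI allI impI)
    fix i assume i: "Suc i < length (x#y#zs)"
    show "{(x#y#zs) ! i, (x#y#zs) ! Suc i} \<in> E"
    proof (cases i)
      case 0 then show ?thesis using h by simp
    next
      case (Suc k) then show ?thesis using h i unfolding is_walk_def by auto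
    qed
  qed simp
qed

lemma walk_append:
  "xs \<noteq> [] \<Longrightarrow> ys \<noteq> [] \<Longrightarrow> is_walk E (xs @ ys) \<longleftrightarrow> is_walk E xs \<and> is_walk E ys \<and> {last xs, hd ys} \<in> E"
proof (induction xs rule: induct_list012)
  case (2 x) then show ?case by (cases ys) auto
next
  case (3 x y zs) then show ?case by auto
qed simp

lemma walk_rev: "is_walk E xs \<Longrightarrow> is_walk E (rev xs)"
proof (induction xs rule: induct_list012)
  case (3 x y zs)
  then have "is_walk E (rev (y#zs))" "{x,y} \<in> E" by auto
  then show ?case using walk_append[of "rev (y#zs)" "[x]" E] by (simp add: insert_commute)
qed auto

lemma walk_join:
  assumes "is_walk E xs" "is_walk E ys" "last xs = hd ys"
  shows "is_walk E (xs @ tl ys) \<and> hd (xs @ tl ys) = hd xs \<and> last (xs @ tl ys) = last ys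
         \<and> length (xs @ tl ys) = length xs + length ys - 1"
proof (cases ys)
  case Nil then show ?thesis using assms by simp
next
  case (Cons y ys')
  show ?thesis
  proof (cases ys')
    case Nil then show ?thesis using assms Cons by (cases xs) auto
  next
    case (Cons z zs)
    have "is_walk E (xs @ ys')" using walk_append[of xs ys' E] assms \<open>ys = y#ys'\<close> Cons
      by (cases xs) auto
    then show ?thesis using assms \<open>ys = y#ys'\<close> Cons by (cases xs) auto
  qed
qed

definition conn :: "'a set set \<Rightarrow> 'a \<Rightarrow> 'a \<Rightarrow> bool" where
  "conn E a b \<longleftrightarrow> (\<exists>xs. is_walk E xs \<and> hd xs = a \<and> last xs = b)"

lemma gdist_le: "is_walk E xs \<Longrightarrow> hd xs = a \<Longrightarrow> last xs = b \<Longrightarrow> gdist E a b \<le> length xs - 1"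
  unfolding gdist_def by (rule Least_le) (cases xs; auto)

lemma gdist_ex: "conn E a b \<Longrightarrow> \<exists>xs. is_walk E xs \<and> hd xs = a \<and> last xs = b \<and> length xs = Suc (gdist E a b)"
  unfolding gdist_def conn_def
proof (rule LeastI_ex)
  assume "\<exists>xs. is_walk E xs \<and> hd xs = a \<and> last xs = b"
  then obtain xs where "is_walk E xs \<and> hd xs = a \<and> last xs = b" by blast
  then show "\<exists>n xs. is_walk E xs \<and> hd xs = a \<and> last xs = b \<and> length xs = Suc n"
    by (intro exI[of _ "length xs - 1"] exI[of _ xs]) (cases xs; auto)
qed

lemma gdist_refl[simp]: "gdist E a a = 0"
  using gdist_le[of E "[a]" a a] by simp

lemma gdist_sym: "gdist E a b = gdist E b a"
proof -
  have "(\<lambda>n. \<exists>xs. is_walk E xs \<and> hd xs = a \<and> last xs = b \<and> length xs = Suc n)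
      = (\<lambda>n. \<exists>xs. is_walk E xs \<and> hd xs = b \<and> last xs = a \<and> length xs = Suc n)"
  proof (intro ext iffI)
    fix n assume "\<exists>xs. is_walk E xs \<and> hd xs = a \<and> last xs = b \<and> length xs = Suc n"
    then obtain xs where "is_walk E xs \<and> hd xs = a \<and> last xs = b \<and> length xs = Suc n" by blast
    then show "\<exists>xs. is_walk E xs \<and> hd xs = b \<and> last xs = a \<and> length xs = Suc n"
      by (intro exI[of _ "rev xs"]) (auto simp: walk_rev hd_rev last_rev)
  next
    fix n assume "\<exists>xs. is_walk E xs \<and> hd xs = b \<and> last xs = a \<and> length xs = Suc n"
    then obtain xs where "is_walk E xs \<and> hd xs = b \<and> last xs = a \<and> length xs = Suc n" by blast
    then show "\<exists>xs. is_walk E xs \<and> hd xs = a \<and> last xs = b \<and> length xs = Suc n"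
      by (intro exI[of _ "rev xs"]) (auto simp: walk_rev hd_rev last_rev)
  qed
  then show ?thesis unfolding gdist_def by simp
qed

lemma gdist_tri:
  assumes "conn E a b" "conn E b c"
  shows "gdist E a c \<le> gdist E a b + gdist E b c"
proof -
  obtain xs where xs: "is_walk E xs" "hd xs = a" "last xs = b" "length xs = Suc (gdist E a b)"
    using gdist_ex[OF assms(1)] by blast
  obtain ys where ys: "is_walk E ys" "hd ys = b" "last ys = c" "length ys = Suc (gdist E b c)"
    using gdist_ex[OF assms(2)] by blast
  have j: "is_walk E (xs @ tl ys) \<and> hd (xs @ tl ys) = hd xs \<and> last (xs @ tl ys) = last ys
         \<and> length (xs @ tl ys) = length xs + length ys - 1"
    using walk_join[OF xs(1) ys(1)] xs ys by simp
  then show ?thesis using gdist_le[of E "xs @ tl ys" a c] xs ys by simp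
qed

lemma conn_sym: "conn E a b \<Longrightarrow> conn E b a"
proof -
  assume "conn E a b"
  then obtain xs where "is_walk E xs" "hd xs = a" "last xs = b" unfolding conn_def by blast
  then show "conn E b a" unfolding conn_def
    by (intro exI[of _ "rev xs"]) (auto simp: walk_rev hd_rev last_rev)
qed

lemma walk_mono: "is_walk E xs \<Longrightarrow> E \<subseteq> E' \<Longrightarrow> is_walk E' xs"
  unfolding is_walk_def by blast

locale leafctx =
  fixes E :: "'a set set" and u w :: 'a
  assumes edges2: "\<forall>e\<in>E. card e = 2"
    and leaf: "card {e \<in> E. u \<in> e} = 1"
    and uw: "{u, w} \<in> E"
begin

lemma u_ne_w: "u \<noteq> w"
proof
  assume "u = w"
  then have "card {u,w} = 1" by simp
  moreover have "card {u,w} = 2" using edges2 uw by blast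
  ultimately show False by simp
qed

lemma leaf_edge: assumes "{u, y} \<in> E" shows "y = w"
proof -
  obtain e where e: "{e \<in> E. u \<in> e} = {e}" using leaf by (rule card_1_singletonE)
  have "{u,y} \<in> {e \<in> E. u \<in> e}" "{u,w} \<in> {e \<in> E. u \<in> e}" using assms uw by auto
  then have "{u,y} = {u,w}" unfolding e by simp
  then show ?thesis using u_ne_w by (auto simp: doubleton_eq_iff)
qed

lemma gdist_leaf:
  assumes "t \<noteq> u" "conn E w t"
  shows "gdist E u t = gdist E w t + 1"
proof (rule antisym)
  obtain xs where xs: "is_walk E xs" "hd xs = w" "last xs = t" "length xs = Suc (gdist E w t)"
    using gdist_ex[OF assms(2)] by blast
  have "is_walk E (u # xs)" using xs uw by (cases xs) auto
  then have "gdist E u t \<le> length (u#xs) - 1" using gdist_le[of E "u#xs" u t] xs by (cases xs) auto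
  then show "gdist E u t \<le> gdist E w t + 1" using xs by simp
next
  have cu: "conn E u w" unfolding conn_def by (intro exI[of _ "[u,w]"]) (simp add: uw)
  have "conn E u t"
  proof -
    obtain p where p: "is_walk E p" "hd p = w" "last p = t" using assms(2) unfolding conn_def by blast
    have "is_walk E ([u,w] @ tl p) \<and> hd ([u,w] @ tl p) = hd [u,w] \<and> last ([u,w] @ tl p) = last p
         \<and> length ([u,w] @ tl p) = length [u,w] + length p - 1"
      by (rule walk_join) (use p uw in auto)
    then show ?thesis unfolding conn_def using p by (intro exI[of _ "[u,w] @ tl p"]) simp
  qed
  from gdist_ex[OF this] obtain ys where ys: "is_walk E ys" "hd ys = u" "last ys = t" "length ys = Suc (gdist E u t)"
    by blast
  obtain y zs where yz: "ys = u # y # zs"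
    using ys assms(1) by (cases ys; cases "tl ys") auto
  have "{u,y} \<in> E" using ys(1) yz by simp
  then have "y = w" by (rule leaf_edge)
  then have "is_walk E (w#zs)" "last (w#zs) = t" using ys yz by auto
  then have "gdist E w t \<le> length (w#zs) - 1" using gdist_le[of E "w#zs" w t] by simp
  then show "gdist E w t + 1 \<le> gdist E u t" using ys(4) yz by simp
qed

definition E' where "E' = {e \<in> E. u \<notin> e}"

lemma del_walk:
  "is_walk E xs \<Longrightarrow> hd xs \<noteq> u \<Longrightarrow> last xs \<noteq> u \<Longrightarrow>
   \<exists>ys. is_walk E' ys \<and> hd ys = hd xs \<and> last ys = last xs \<and> length ys \<le> length xs"
proof (induction "length xs" arbitrary: xs rule: less_induct)
  case less
  show ?case
  proof (cases "u \<in> set xs")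
    case False
    have "is_walk E' xs" unfolding is_walk_def E'_def
    proof (intro conjI allI impI)
      show "xs \<noteq> []" using less.prems(1) by (simp add: is_walk_def)
    next
      fix i assume i: "Suc i < length xs"
      then have "xs ! i \<in> set xs" "xs ! Suc i \<in> set xs" by simp_all
      then show "{xs ! i, xs ! Suc i} \<in> {e \<in> E. u \<notin> e}"
        using False less.prems(1) i unfolding is_walk_def by auto
    qed
    then show ?thesis by blast
  next
    case True
    then obtain as bs where xs: "xs = as @ u # bs" by (meson split_list)
    have asne: "as \<noteq> []" using xs less.prems(2) by auto
    have bsne: "bs \<noteq> []" using xs less.prems(3) by auto
    have w1: "is_walk E as" "is_walk E (u#bs)" "{last as, u} \<in> E"
      using walk_append[of as "u#bs" E] asne less.prems(1) xs by auto
    have "{u, last as} \<in> E" using w1(3) by (simp add: insert_commute)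
    then have "last as = w" by (rule leaf_edge)
    obtain b1 bs' where bs: "bs = b1 # bs'" using bsne by (cases bs) auto
    have "{u, b1} \<in> E" "is_walk E bs" using w1(2) bs by auto
    then have "b1 = w" "is_walk E bs" using leaf_edge[of b1] by blast+
    then have jn: "is_walk E (as @ tl bs) \<and> hd (as @ tl bs) = hd as \<and> last (as @ tl bs) = last bs
         \<and> length (as @ tl bs) = length as + length bs - 1"
      using walk_join[OF w1(1) \<open>is_walk E bs\<close>] \<open>last as = w\<close> bs by simp
    have l: "length (as @ tl bs) < length xs" using xs bs by simp
    have hh: "hd (as @ tl bs) = hd xs" "last (as @ tl bs) = last xs" using jn xs asne bsne by auto
    have w2: "is_walk E (as @ tl bs)" using jn by blast
    have "hd (as @ tl bs) \<noteq> u" "last (as @ tl bs) \<noteq> u" using hh less.prems by auto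
    from less.hyps[OF l w2 this] obtain ys where "is_walk E' ys \<and> hd ys = hd xs \<and> last ys = last xs \<and> length ys \<le> length (as @ tl bs)"
      using hh by auto
    then show ?thesis using l by (intro exI[of _ ys]) auto
  qed
qed

lemma gdist_del:
  assumes "a \<noteq> u" "b \<noteq> u" "conn E a b"
  shows "gdist E' a b = gdist E a b"
proof (rule antisym)
  obtain xs where xs: "is_walk E xs" "hd xs = a" "last xs = b" "length xs = Suc (gdist E a b)"
    using gdist_ex[OF assms(3)] by blast
  obtain ys where ys: "is_walk E' ys" "hd ys = a" "last ys = b" "length ys \<le> length xs"
  proof -
    have "hd xs \<noteq> u" "last xs \<noteq> u" using xs(2,3) assms(1,2) by simp_all
    from del_walk[OF xs(1) this] show ?thesis using that xs(2,3) by blast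
  qed
  show "gdist E' a b \<le> gdist E a b" using gdist_le[OF ys(1-3)] ys(4) xs(4) by simp
  have "conn E' a b" using ys unfolding conn_def by blast
  from gdist_ex[OF this] obtain zs where zs: "is_walk E' zs" "hd zs = a" "last zs = b" "length zs = Suc (gdist E' a b)"
    by blast
  have "E' \<subseteq> E" unfolding E'_def by blast
  with zs(1) have "is_walk E zs" by (rule walk_mono)
  then show "gdist E a b \<le> gdist E' a b" using gdist_le[OF _ zs(2,3)] zs(4) by simp
qed

end




definition fscale :: "real \<Rightarrow> ('j \<Rightarrow> real) \<Rightarrow> ('j \<Rightarrow> real)" where
  "fscale c f = (\<lambda>j. c * f j)"

interpretation fv: vector_space fscale
  by unfold_locales (auto simp: fun_eq_iff fscale_def algebra_simps)

lemma sum_fun_apply: "(\<Sum>x\<in>S. f x) (j::'j) = (\<Sum>x\<in>S. f x j)" for f :: "'i \<Rightarrow> 'j \<Rightarrow> real"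
  by (induction S rule: infinite_finite_induct) auto

definition rowv :: "'j set \<Rightarrow> ('i \<Rightarrow> 'j \<Rightarrow> real) \<Rightarrow> 'i \<Rightarrow> 'j \<Rightarrow> real" where
  "rowv J M i = (\<lambda>j. if j \<in> J then M i j else 0)"

lemma sum_rowv: "(\<Sum>i\<in>K. fscale (c i) (rowv J M i)) j = (if j \<in> J then (\<Sum>i\<in>K. c i * M i j) else 0)"
  by (auto simp: sum_fun_apply fscale_def rowv_def)

lemma indep_imp:
  fixes M :: "'i \<Rightarrow> 'j \<Rightarrow> real"
  assumes "finite K" "rows_lin_indep K J M"
  shows "inj_on (rowv J M) K \<and> fv.independent (rowv J M ` K)"
proof
  show inj: "inj_on (rowv J M) K"
  proof (rule inj_onI, rule ccontr)
    fix a b assume ab: "a \<in> K" "b \<in> K" "rowv J M a = rowv J M b" "a \<noteq> b"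
    define c where "c = (\<lambda>i. (if i = a then 1 else 0) - (if i = b then 1 else (0::real)))"
    have "\<forall>j\<in>J. (\<Sum>i\<in>K. c i * M i j) = 0"
    proof
      fix j assume j: "j \<in> J"
      have "M a j = M b j" using fun_cong[OF ab(3), of j] j unfolding rowv_def by simp
      have "(\<Sum>i\<in>K. c i * M i j) = (\<Sum>i\<in>K. (if i = a then M i j else 0) - (if i = b then M i j else 0))"
        by (rule sum.cong) (auto simp: c_def)
      also have "\<dots> = M a j - M b j" using ab assms(1) by (simp add: sum_subtractf)
      finally show "(\<Sum>i\<in>K. c i * M i j) = 0" using \<open>M a j = M b j\<close> by simp
    qed
    then have "c a = 0" using assms(2) ab unfolding rows_lin_indep_def by blast
    then show False using ab by (simp add: c_def)
  qed
  show "fv.independent (rowv J M ` K)"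
  proof
    assume "fv.dependent (rowv J M ` K)"
    then obtain u where u: "\<exists>v\<in>rowv J M ` K. u v \<noteq> 0" "(\<Sum>v\<in>rowv J M ` K. fscale (u v) v) = 0"
      using fv.dependent_finite[of "rowv J M ` K"] assms(1) by auto
    have "(\<Sum>i\<in>K. fscale (u (rowv J M i)) (rowv J M i)) = 0"
      using u(2) by (simp add: sum.reindex[OF inj])
    then have "\<forall>j\<in>J. (\<Sum>i\<in>K. u (rowv J M i) * M i j) = 0"
    proof (intro ballI)
      fix j assume "j \<in> J" and h0: "(\<Sum>i\<in>K. fscale (u (rowv J M i)) (rowv J M i)) = 0"
      show "(\<Sum>i\<in>K. u (rowv J M i) * M i j) = 0"
        using fun_cong[OF h0, of j] sum_rowv[where c="\<lambda>i. u (rowv J M i)" and K=K and J=J and M=M and j=j] \<open>j \<in> J\<close>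
        by simp
    qed
    then have "\<forall>i\<in>K. u (rowv J M i) = 0"
      using assms(2)[unfolded rows_lin_indep_def, rule_format, of "\<lambda>i. u (rowv J M i)"] by blast
    then show False using u(1) by auto
  qed
qed

lemma imp_indep:
  fixes M :: "'i \<Rightarrow> 'j \<Rightarrow> real"
  assumes "finite K" "inj_on (rowv J M) K" "fv.independent (rowv J M ` K)"
  shows "rows_lin_indep K J M"
  unfolding rows_lin_indep_def
proof (intro allI impI)
  fix c :: "'i \<Rightarrow> real" assume c: "\<forall>j\<in>J. (\<Sum>i\<in>K. c i * M i j) = 0"
  define u where "u = (\<lambda>x. c (inv_into K (rowv J M) x))"
  have "(\<Sum>i\<in>K. fscale (c i) (rowv J M i)) = 0"
    using c by (auto simp: fun_eq_iff sum_rowv)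
  moreover have "(\<Sum>i\<in>K. fscale (c i) (rowv J M i)) = (\<Sum>x\<in>rowv J M ` K. fscale (u x) x)"
    by (simp add: sum.reindex[OF assms(2)] u_def assms(2))
  ultimately have "\<forall>x\<in>rowv J M ` K. u x = 0"
    using fv.dependent_finite[of "rowv J M ` K"] assms by auto
  then show "\<forall>i\<in>K. c i = 0" by (auto simp: u_def assms(2))
qed

lemma rank_set_finite: "finite I \<Longrightarrow> finite {card K | K. K \<subseteq> I \<and> rows_lin_indep K J M}"
  by (rule finite_subset[of _ "card ` Pow I"]) auto

lemma rank_set_ne: "{} \<subseteq> I \<and> rows_lin_indep {} J M"
  by (simp add: rows_lin_indep_def)

lemma rank_ge: "finite I \<Longrightarrow> K \<subseteq> I \<Longrightarrow> rows_lin_indep K J M \<Longrightarrow> card K \<le> mat_rank I J M"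
  unfolding mat_rank_def by (rule Max_ge[OF rank_set_finite]) auto

lemma rank_obtain: assumes "finite I"
  obtains K where "K \<subseteq> I" "rows_lin_indep K J M" "card K = mat_rank I J M"
proof -
  have "mat_rank I J M \<in> {card K | K. K \<subseteq> I \<and> rows_lin_indep K J M}"
    unfolding mat_rank_def using rank_set_finite[OF assms] rank_set_ne[of I J M]
    by (intro Max_in) blast+
  then show ?thesis using that by auto
qed

lemma rank_mono_rows: "finite I \<Longrightarrow> I' \<subseteq> I \<Longrightarrow> mat_rank I' J M \<le> mat_rank I J M"
proof -
  assume fin: "finite I" and sub: "I' \<subseteq> I"
  have finI': "finite I'" using sub fin by (rule finite_subset)
  obtain K where K: "K \<subseteq> I'" "rows_lin_indep K J M" "card K = mat_rank I' J M"
    by (rule rank_obtain[OF finI'])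
  have "K \<subseteq> I" using K(1) sub by (rule order_trans)
  from rank_ge[OF fin this K(2)] K(3) show ?thesis by simp
qed

lemma row_reduce:
  fixes M :: "'i \<Rightarrow> 'j \<Rightarrow> real"
  assumes fin: "finite I" and sub: "I' \<subseteq> I"
    and comb: "\<And>i. i \<in> I \<Longrightarrow> \<exists>S a. S \<subseteq> I' \<and> finite S \<and> (\<forall>j\<in>J. M i j = (\<Sum>s\<in>S. a s * M s j))"
  shows "mat_rank I J M = mat_rank I' J M"
proof (rule antisym[OF _ rank_mono_rows[OF fin sub]])
  obtain K where K: "K \<subseteq> I" "rows_lin_indep K J M" "card K = mat_rank I J M"
    by (rule rank_obtain[OF fin])
  have finK: "finite K" using K(1) fin by (rule finite_subset)
  note ind = indep_imp[OF finK K(2)]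
  have spanI: "rowv J M i \<in> fv.span (rowv J M ` I')" if iI: "i \<in> I" for i
  proof -
    obtain S a where S: "S \<subseteq> I'" "finite S" "\<forall>j\<in>J. M i j = (\<Sum>s\<in>S. a s * M s j)"
      using comb[OF iI] by blast
    have "rowv J M i = (\<Sum>s\<in>S. fscale (a s) (rowv J M s))"
      using S(3) by (simp add: fun_eq_iff sum_rowv) (simp add: rowv_def)
    also have "\<dots> \<in> fv.span (rowv J M ` I')"
      proof (rule fv.span_sum)
      fix s assume "s \<in> S"
      then have "rowv J M s \<in> fv.span (rowv J M ` I')" using S(1) by (intro fv.span_base) auto
      then show "fscale (a s) (rowv J M s) \<in> fv.span (rowv J M ` I')" by (rule fv.span_scale)
    qed
    finally show ?thesis .
  qed
  obtain B where B: "B \<subseteq> rowv J M ` I'" "fv.independent B" "rowv J M ` I' \<subseteq> fv.span B"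
    using fv.maximal_independent_subset by blast
  have finI': "finite I'" using sub fin by (rule finite_subset)
  have finB: "finite B" using B(1) finI' by (meson finite_imageI finite_subset)
  have "rowv J M ` K \<subseteq> fv.span B"
  proof
    fix x assume "x \<in> rowv J M ` K"
    then have "x \<in> fv.span (rowv J M ` I')" using spanI K(1) by auto
    then show "x \<in> fv.span B" using fv.span_minimal[OF B(3) fv.subspace_span] by blast
  qed
  then have "card (rowv J M ` K) \<le> card B" using fv.independent_span_bound[OF finB] ind by blast
  moreover have "card (rowv J M ` K) = card K" using ind card_image by blast
  ultimately have c1: "card K \<le> card B" by simp
  obtain K' where K': "K' \<subseteq> I'" "inj_on (rowv J M) K'" "B = rowv J M ` K'"
    using subset_image_inj[THEN iffD1, OF B(1)] by blast
  have finK': "finite K'" using K'(1) finI' by (rule finite_subset)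
  have "fv.independent (rowv J M ` K')" using B(2) K'(3) by simp
  then have "rows_lin_indep K' J M" by (rule imp_indep[OF finK' K'(2)])
  then have "card K' \<le> mat_rank I' J M" by (rule rank_ge[OF finI' K'(1)])
  moreover have "card K' = card B" using card_image[OF K'(2)] K'(3) by simp
  ultimately show "mat_rank I J M \<le> mat_rank I' J M" using c1 K(3) by simp
qed

lemma col_reduce_indep:
  fixes M :: "'i \<Rightarrow> 'j \<Rightarrow> real"
  assumes sub: "J' \<subseteq> J" and KI: "K \<subseteq> I"
    and comb: "\<And>j. j \<in> J \<Longrightarrow> \<exists>S a. S \<subseteq> J' \<and> finite S \<and> (\<forall>i\<in>I. M i j = (\<Sum>s\<in>S. a s * M i s))"
  shows "rows_lin_indep K J M = rows_lin_indep K J' M"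
proof
  assume "rows_lin_indep K J' M" then show "rows_lin_indep K J M"
    using sub unfolding rows_lin_indep_def by blast
next
  assume h: "rows_lin_indep K J M"
  show "rows_lin_indep K J' M" unfolding rows_lin_indep_def
  proof (intro allI impI)
    fix c :: "'i \<Rightarrow> real" assume c: "\<forall>j\<in>J'. (\<Sum>i\<in>K. c i * M i j) = 0"
    have "\<forall>j\<in>J. (\<Sum>i\<in>K. c i * M i j) = 0"
    proof
      fix j assume j: "j \<in> J"
      obtain S a where S: "S \<subseteq> J'" "finite S" "\<forall>i\<in>I. M i j = (\<Sum>s\<in>S. a s * M i s)"
        using comb[OF j] by blast
      have "(\<Sum>i\<in>K. c i * M i j) = (\<Sum>i\<in>K. c i * (\<Sum>s\<in>S. a s * M i s))"
        using S(3) KI by (intro sum.cong) auto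
      also have "\<dots> = (\<Sum>s\<in>S. a s * (\<Sum>i\<in>K. c i * M i s))"
      proof -
        have "(\<Sum>i\<in>K. c i * (\<Sum>s\<in>S. a s * M i s)) = (\<Sum>i\<in>K. \<Sum>s\<in>S. a s * (c i * M i s))"
          by (simp add: sum_distrib_left mult.left_commute)
        also have "\<dots> = (\<Sum>s\<in>S. \<Sum>i\<in>K. a s * (c i * M i s))" by (rule sum.swap)
        also have "\<dots> = (\<Sum>s\<in>S. a s * (\<Sum>i\<in>K. c i * M i s))" by (simp add: sum_distrib_left)
        finally show ?thesis .
      qed
      also have "\<dots> = 0" using c S(1) by (intro sum.neutral) auto
      finally show "(\<Sum>i\<in>K. c i * M i j) = 0" .
    qed
    then show "\<forall>i\<in>K. c i = 0" using h unfolding rows_lin_indep_def by blast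
  qed
qed

lemma col_reduce:
  fixes M :: "'i \<Rightarrow> 'j \<Rightarrow> real"
  assumes sub: "J' \<subseteq> J"
    and comb: "\<And>j. j \<in> J \<Longrightarrow> \<exists>S a. S \<subseteq> J' \<and> finite S \<and> (\<forall>i\<in>I. M i j = (\<Sum>s\<in>S. a s * M i s))"
  shows "mat_rank I J M = mat_rank I J' M"
proof -
  have "{card K | K. K \<subseteq> I \<and> rows_lin_indep K J M} = {card K | K. K \<subseteq> I \<and> rows_lin_indep K J' M}"
    using col_reduce_indep[OF sub _ comb] by blast
  then show ?thesis unfolding mat_rank_def by simp
qed

lemma rank_cong:
  fixes M :: "'i \<Rightarrow> 'j \<Rightarrow> real"
  assumes "\<And>i j. i \<in> I \<Longrightarrow> j \<in> J \<Longrightarrow> M i j = M' i j"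
  shows "mat_rank I J M = mat_rank I J M'"
proof -
  have "K \<subseteq> I \<Longrightarrow> rows_lin_indep K J M = rows_lin_indep K J M'" for K
  proof -
    assume KI: "K \<subseteq> I"
    have "(\<Sum>i\<in>K. c i * M i j) = (\<Sum>i\<in>K. c i * M' i j)" if "j \<in> J" for c j
      using assms KI that by (intro sum.cong) auto
    then show ?thesis unfolding rows_lin_indep_def by simp
  qed
  then have "{card K | K. K \<subseteq> I \<and> rows_lin_indep K J M} = {card K | K. K \<subseteq> I \<and> rows_lin_indep K J M'}"
    by blast
  then show ?thesis unfolding mat_rank_def by simp
qed




lemma R1:
  assumes F4: "\<And>t. t \<in> V \<Longrightarrow> t \<noteq> u \<Longrightarrow> gdist E u t = gdist E w t + 1"
    and F4': "\<And>t. t \<in> V \<Longrightarrow> t \<noteq> u \<Longrightarrow> gdist E t u = gdist E w t + 1"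
    and F5: "\<And>t. t \<in> V \<Longrightarrow> t \<noteq> v \<Longrightarrow> gdist E v t = gdist E w t + 1"
    and F5': "\<And>t. t \<in> V \<Longrightarrow> t \<noteq> v \<Longrightarrow> gdist E t v = gdist E w t + 1"
    and V: "u \<in> V" "v \<in> V" "w \<in> V" "x \<in> V" "y \<in> V" "z \<in> V"
    and ne: "x \<noteq> u" "x \<noteq> v" "u \<noteq> v" "w \<noteq> u" "w \<noteq> v"
    and yz: "y \<noteq> z"
    and T: "gdist E x y \<le> gdist E w x + gdist E w y" "gdist E x z \<le> gdist E w x + gdist E w z"
           "gdist E y z \<le> gdist E w y + gdist E w z"
  shows "max4 E u x y z = max4 E v x y z"
  using T yz unfolding max4_def
  by (cases "y = u"; cases "y = v"; cases "z = u"; cases "z = v")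
     (simp_all add: F4 F4' F5 F5' V ne ne[symmetric] max_def)

lemma R2:
  assumes F4: "\<And>t. t \<in> V \<Longrightarrow> t \<noteq> u \<Longrightarrow> gdist E u t = gdist E w t + 1"
    and F4': "\<And>t. t \<in> V \<Longrightarrow> t \<noteq> u \<Longrightarrow> gdist E t u = gdist E w t + 1"
    and F5: "\<And>t. t \<in> V \<Longrightarrow> t \<noteq> v \<Longrightarrow> gdist E v t = gdist E w t + 1"
    and F5': "\<And>t. t \<in> V \<Longrightarrow> t \<noteq> v \<Longrightarrow> gdist E t v = gdist E w t + 1"
    and V: "u \<in> V" "v \<in> V" "w \<in> V" "x \<in> V" "y \<in> V" "z \<in> V"
    and ne: "x \<noteq> u" "x \<noteq> v" "u \<noteq> v" "w \<noteq> u" "w \<noteq> v" "x \<noteq> w"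
    and yz: "y \<noteq> z"
    and T: "gdist E x y \<le> gdist E w x + gdist E w y" "gdist E x z \<le> gdist E w x + gdist E w z"
           "gdist E y z \<le> gdist E w y + gdist E w z"
  shows "max4 E u v y z + max4 E w x y z = max4 E v w y z + max4 E v x y z"
  using T yz unfolding max4_def
  by (cases "y = u"; cases "y = v"; cases "z = u"; cases "z = v")
     (simp_all add: F4 F4' F5 F5' V ne ne[symmetric] max_def)




lemma max4_swap1: "max4 E x w y z = max4 E w x y z"
  unfolding max4_def gdist_sym[of E x w] by (simp add: max_def)

lemma max4_swap2: "max4 E w x z y = max4 E w x y z"
  unfolding max4_def gdist_sym[of E z y] by (simp add: max_def)

lemma max4_swap3: "max4 E y z w x = max4 E w x y z"
  unfolding max4_def gdist_sym[of E y w] gdist_sym[of E y x] gdist_sym[of E z w] gdist_sym[of E z x]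
  by (simp add: max_def)

lemma Max4PC_eq: "Max4PC E {a,b} {c,e} = max4 E a b c e"
proof -
  have "{max4 E w x y z | w x y z. {a,b} = {w, x} \<and> {c,e} = {y, z}} = {max4 E a b c e}"
  proof (intro equalityI subsetI)
    fix t assume "t \<in> {max4 E w x y z | w x y z. {a,b} = {w, x} \<and> {c,e} = {y, z}}"
    then obtain w x y z where t: "t = max4 E w x y z" "{a,b} = {w,x}" "{c,e} = {y,z}" by blast
    from t(2) have "(w = a \<and> x = b) \<or> (w = b \<and> x = a)" by (auto simp: doubleton_eq_iff)
    moreover from t(3) have "(y = c \<and> z = e) \<or> (y = e \<and> z = c)" by (auto simp: doubleton_eq_iff)
    ultimately show "t \<in> {max4 E a b c e}" using t(1) max4_swap1[of E b a c e] max4_swap1[of E b a e c] max4_swap2[of E a b e c] by auto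
  next
    fix t assume "t \<in> {max4 E a b c e}"
    then show "t \<in> {max4 E w x y z | w x y z. {a,b} = {w, x} \<and> {c,e} = {y, z}}" by blast
  qed
  then show ?thesis unfolding Max4PC_def by simp
qed

lemma in_pairs: "{a,b} \<in> pairs V \<longleftrightarrow> a \<in> V \<and> b \<in> V \<and> a \<noteq> b"
  unfolding pairs_def by (cases "a = b") auto

lemma pairsE: assumes "p \<in> pairs V" obtains a b where "p = {a,b}" "a \<noteq> b" "a \<in> V" "b \<in> V"
proof -
  have "p \<subseteq> V" "card p = 2" using assms unfolding pairs_def by auto
  then obtain a b where "p = {a,b}" "a \<noteq> b" unfolding card_2_iff by blast
  then show ?thesis using that \<open>p \<subseteq> V\<close> by blast
qed

lemma Max4PC_sym: "p \<in> pairs V \<Longrightarrow> q \<in> pairs V \<Longrightarrow> Max4PC E p q = Max4PC E q p"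
  by (elim pairsE) (simp add: Max4PC_eq max4_swap3)

lemma finite_pairs: "finite V \<Longrightarrow> finite (pairs V)"
  unfolding pairs_def by (rule finite_subset[of _ "Pow V"]) auto

lemma main_u:
  fixes V :: "'a set" and E :: "'a set set" and u v w :: 'a
  assumes tree: "is_tree V E"
    and cardV: "card V > 3"
    and lu: "is_leaf V E u" and lv: "is_leaf V E v" and uv: "u \<noteq> v"
    and uw: "{u, w} \<in> E" and vw: "{v, w} \<in> E"
  shows "rank_Max4PC V E = rank_Max4PC (del_vert_V V u) (del_vert_E E u)"
proof -
  have finV: "finite V" using tree unfolding is_tree_def by blast
  have edges: "\<forall>e\<in>E. e \<subseteq> V \<and> card e = 2" using tree unfolding is_tree_def by blast
  have connV: "\<And>x y. x \<in> V \<Longrightarrow> y \<in> V \<Longrightarrow> conn E x y"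
    using tree unfolding is_tree_def conn_def by blast
  interpret LU: leafctx E u w
    using edges lu uw unfolding is_leaf_def by unfold_locales auto
  interpret LV: leafctx E v w
    using edges lv vw unfolding is_leaf_def by unfold_locales auto
  have uV: "u \<in> V" using lu unfolding is_leaf_def by blast
  have vV: "v \<in> V" using lv unfolding is_leaf_def by blast
  have "{u,w} \<subseteq> V" using edges uw by blast
  then have wV: "w \<in> V" by blast
  have uw': "u \<noteq> w" by (rule LU.u_ne_w)
  have vw': "v \<noteq> w" by (rule LV.u_ne_w)
  have "\<not> V \<subseteq> {u, v, w}"
  proof
    assume "V \<subseteq> {u,v,w}"
    then have "card V \<le> card {u,v,w}" by (rule card_mono[rotated]) simp
    also have "\<dots> \<le> 3" by (simp add: card_insert_if)
    finally show False using cardV by simp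
  qed
  then obtain x0 where x0: "x0 \<in> V" "x0 \<noteq> u" "x0 \<noteq> v" "x0 \<noteq> w" by blast
  have F4: "\<And>t. t \<in> V \<Longrightarrow> t \<noteq> u \<Longrightarrow> gdist E u t = gdist E w t + 1"
    by (rule LU.gdist_leaf[OF _ connV[OF wV]])
  have F4': "\<And>t. t \<in> V \<Longrightarrow> t \<noteq> u \<Longrightarrow> gdist E t u = gdist E w t + 1"
  proof -
    fix t assume "t \<in> V" "t \<noteq> u"
    then show "gdist E t u = gdist E w t + 1" using F4[of t] gdist_sym[of E t u] by simp
  qed
  have F5: "\<And>t. t \<in> V \<Longrightarrow> t \<noteq> v \<Longrightarrow> gdist E v t = gdist E w t + 1"
    by (rule LV.gdist_leaf[OF _ connV[OF wV]])
  have F5': "\<And>t. t \<in> V \<Longrightarrow> t \<noteq> v \<Longrightarrow> gdist E t v = gdist E w t + 1"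
  proof -
    fix t assume "t \<in> V" "t \<noteq> v"
    then show "gdist E t v = gdist E w t + 1" using F5[of t] gdist_sym[of E t v] by simp
  qed
  have Tri: "\<And>a b. a \<in> V \<Longrightarrow> b \<in> V \<Longrightarrow> gdist E a b \<le> gdist E w a + gdist E w b"
  proof -
    fix a b assume ab: "a \<in> V" "b \<in> V"
    have "gdist E a b \<le> gdist E a w + gdist E w b" by (rule gdist_tri[OF connV[OF ab(1) wV] connV[OF wV ab(2)]])
    then show "gdist E a b \<le> gdist E w a + gdist E w b" by (simp add: gdist_sym[of E a w])
  qed
  define M where "M = Max4PC E"
  define P where "P = pairs V"
  define P' where "P' = pairs (V - {u})"
  have finP: "finite P" unfolding P_def by (rule finite_pairs[OF finV])
  have subP: "P' \<subseteq> P" unfolding P_def P'_def pairs_def by auto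
  have comb: "\<exists>S a. S \<subseteq> P' \<and> finite S \<and> (\<forall>j\<in>P. M i j = (\<Sum>s\<in>S. a s * M s j))" if iP: "i \<in> P" for i
  proof (cases "u \<in> i")
    case False
    have "i \<in> P'" using iP False unfolding P_def P'_def pairs_def by auto
    then show ?thesis by (intro exI[of _ "{i}"] exI[of _ "\<lambda>_. 1"]) simp
  next
    case True
    obtain x where ix: "i = {u,x}" "x \<noteq> u" "x \<in> V"
      using iP True unfolding P_def by (elim pairsE) (auto simp: insert_commute)
    show ?thesis
    proof (cases "x = v")
      case False
      have "{v,x} \<in> P'" unfolding P'_def in_pairs using ix vV False uv by auto
      moreover have "M i j = M {v,x} j" if "j \<in> P" for j
      proof -
        obtain c e where ce: "j = {c,e}" "c \<noteq> e" "c \<in> V" "e \<in> V"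
          using \<open>j \<in> P\<close> unfolding P_def by (elim pairsE)
        have "max4 E u x c e = max4 E v x c e"
          by (rule R1[OF F4 F4' F5 F5' uV vV wV ix(3) ce(3,4) ix(2) False uv uw'[symmetric] vw'[symmetric] ce(2)
                Tri Tri Tri]) (use ix ce in auto)
        then show ?thesis unfolding M_def ix ce Max4PC_eq .
      qed
      ultimately show ?thesis by (intro exI[of _ "{{v,x}}"] exI[of _ "\<lambda>_. 1"]) auto
    next
      case True
      define S where "S = {{v,w},{v,x0},{w,x0}}"
      define a where "a = (\<lambda>s. if s = {w,x0} then -1 else (1::real))"
      have d1: "{v,w} \<noteq> {v,x0}" "{v,w} \<noteq> {w,x0}" "{v,x0} \<noteq> {w,x0}"
        using x0 vw' by (auto simp: doubleton_eq_iff)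
      have "S \<subseteq> P'" unfolding S_def P'_def in_pairs using x0 vV wV uv uw' vw' by (auto simp: in_pairs)
      moreover have "M i j = (\<Sum>s\<in>S. a s * M s j)" if "j \<in> P" for j
      proof -
        obtain c e where ce: "j = {c,e}" "c \<noteq> e" "c \<in> V" "e \<in> V"
          using \<open>j \<in> P\<close> unfolding P_def by (elim pairsE)
        have r2: "max4 E u v c e + max4 E w x0 c e = max4 E v w c e + max4 E v x0 c e"
          by (rule R2[OF F4 F4' F5 F5' uV vV wV x0(1) ce(3,4) x0(2,3) uv uw'[symmetric] vw'[symmetric]
                x0(4) ce(2) Tri Tri Tri]) (use x0 ce in auto)
        have "(\<Sum>s\<in>S. a s * M s j) = M {v,w} j + M {v,x0} j - M {w,x0} j"
          unfolding S_def using d1 by (simp add: a_def)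
        then show ?thesis using r2 unfolding M_def ix True ce Max4PC_eq by simp
      qed
      moreover have "finite S" unfolding S_def by simp
      ultimately show ?thesis by blast
    qed
  qed
  have symM: "M i j = M j i" if "i \<in> P" "j \<in> P" for i j
    using Max4PC_sym that unfolding M_def P_def by blast
  have A: "mat_rank P P M = mat_rank P' P M"
    by (rule row_reduce[OF finP subP comb])
  have B: "mat_rank P' P M = mat_rank P' P' M"
  proof (rule col_reduce[OF subP])
    fix j assume jP: "j \<in> P"
    obtain S a where S: "S \<subseteq> P'" "finite S" "\<forall>i\<in>P. M j i = (\<Sum>s\<in>S. a s * M s i)"
      using comb[OF jP] by blast
    have "\<forall>i\<in>P'. M i j = (\<Sum>s\<in>S. a s * M i s)"
    proof
      fix i assume "i \<in> P'"
      then have iP: "i \<in> P" using subP by blast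
      have "M i j = M j i" using symM iP jP by blast
      also have "\<dots> = (\<Sum>s\<in>S. a s * M s i)" using S(3) iP by blast
      also have "\<dots> = (\<Sum>s\<in>S. a s * M i s)"
        using symM S(1) subP iP by (intro sum.cong) auto
      finally show "M i j = (\<Sum>s\<in>S. a s * M i s)" .
    qed
    then show "\<exists>S a. S \<subseteq> P' \<and> finite S \<and> (\<forall>i\<in>P'. M i j = (\<Sum>s\<in>S. a s * M i s))"
      using S(1,2) by blast
  qed
  have C: "mat_rank P' P' M = mat_rank P' P' (Max4PC (del_vert_E E u))"
  proof (rule rank_cong)
    fix p q assume pq: "p \<in> P'" "q \<in> P'"
    obtain a b where ab: "p = {a,b}" "a \<noteq> b" "a \<in> V - {u}" "b \<in> V - {u}"
      using pq(1) unfolding P'_def by (elim pairsE)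
    obtain c e where ce: "q = {c,e}" "c \<noteq> e" "c \<in> V - {u}" "e \<in> V - {u}"
      using pq(2) unfolding P'_def by (elim pairsE)
    have E': "del_vert_E E u = LU.E'" unfolding del_vert_E_def LU.E'_def by simp
    have g: "gdist (del_vert_E E u) s t = gdist E s t" if "s \<in> V - {u}" "t \<in> V - {u}" for s t
      unfolding E' using LU.gdist_del connV that by blast
    show "M p q = Max4PC (del_vert_E E u) p q"
      unfolding M_def ab ce Max4PC_eq max4_def using ab ce by (simp add: g)
  qed
  show ?thesis unfolding rank_Max4PC_def del_vert_V_def using A B C
    unfolding M_def P_def P'_def by simp
qed



theorem mainTheorem5:
  fixes V :: "'a set" and E :: "'a set set" and u v w :: 'a
  assumes "is_tree V E"
    and "card V > 3"
    and "is_leaf V E u" and "is_leaf V E v" and "u \<noteq> v"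
    and "{u, w} \<in> E" and "{v, w} \<in> E"
  shows "rank_Max4PC V E = rank_Max4PC (del_vert_V V u) (del_vert_E E u)
       \<and> rank_Max4PC V E = rank_Max4PC (del_vert_V V v) (del_vert_E E v)"
proof
  show "rank_Max4PC V E = rank_Max4PC (del_vert_V V u) (del_vert_E E u)"
    by (rule main_u[OF assms])
  show "rank_Max4PC V E = rank_Max4PC (del_vert_V V v) (del_vert_E E v)"
    by (rule main_u[OF assms(1,2,4,3) assms(5)[symmetric] assms(7,6)])
qed

end
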